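(* Let $n>2$ be an integer and let $S\subseteq\mathbb{F}_2^n$ be nonempty. Then $$|\Delta(S)|\ \ge\ \frac{\log|S|}{2\log n}.$$
   Context: For $x,y\in\mathbb{F}_2^n$, the Hamming distance is $d_H(x,y)=\#\{i:x_i\neq y_i\}$, and $\Delta(S)=\{d_H(x,y):x,y\in S\}$ (pairs with $x=y$ allowed). Logarithms are to any fixed base greater than 1. *)

theory Defs
  imports Complex_Main
begin

text \<open>Vectors of F_2^n are represented as boolean lists of length n.\<close>

definition cube :: "nat \<Rightarrow> bool list set" where
  "cube n = {x. length x = n}"

definition hamming :: "bool list \<Rightarrow> bool list \<Rightarrow> nat" where
  "hamming x y = card {i. i < length x \<and> i < length y \<and> x ! i \<noteq> y ! i}"

definition dist_set :: "bool list set \<Rightarrow> nat set" where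
  "dist_set S = {hamming x y | x y. x \<in> S \<and> y \<in> S}"

end

theory Submission
  imports Defs "HOL-Library.Function_Algebras"
begin

definition sc :: "real \<Rightarrow> (bool list \<Rightarrow> real) \<Rightarrow> (bool list \<Rightarrow> real)" where
  "sc c f = (\<lambda>x. c * f x)"

interpretation V: vector_space sc
  by unfold_locales (auto simp: sc_def plus_fun_def algebra_simps)

lemma sum_fun_apply: "(sum f A) x = (\<Sum>a\<in>A. f a x)"
  by (induction A rule: infinite_finite_induct) (auto simp: plus_fun_def zero_fun_def)

definition mon :: "nat \<Rightarrow> nat set \<Rightarrow> bool list \<Rightarrow> real" where
  "mon n I x = (if length x = n then (\<Prod>i\<in>I. (if x!i then 1 else 0)) else 0)"

definition Mk :: "nat \<Rightarrow> nat \<Rightarrow> (bool list \<Rightarrow> real) set" where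
  "Mk n k = mon n ` {I. I \<subseteq> {..<n} \<and> card I \<le> k}"

definition Lf :: "nat \<Rightarrow> real \<Rightarrow> (nat \<Rightarrow> real) \<Rightarrow> bool list \<Rightarrow> real" where
  "Lf n c0 c x = c0 + (\<Sum>i<n. c i * (if x!i then 1 else 0))"

lemma mon_insert:
  assumes "finite I"
  shows "(if x!i then 1 else 0) * mon n I x = mon n (insert i I) x"
proof (cases "x!i")
  case True
  then show ?thesis using assms
    by (cases "i \<in> I") (auto simp: mon_def insert_absorb prod.insert)
next
  case False
  have "(\<Prod>j\<in>insert i I. (if x!j then 1 else 0)::real) = 0"
    using assms False by (intro prod_zero) auto
  then show ?thesis using False by (auto simp: mon_def)
qed

lemma mult_mon:
  assumes "I \<subseteq> {..<n}" "card I \<le> k"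
  shows "(\<lambda>x. Lf n c0 c x * mon n I x) \<in> V.span (Mk n (Suc k))"
proof -
  have fI: "finite I" using assms(1) finite_subset by blast
  have eq: "(\<lambda>x. Lf n c0 c x * mon n I x) =
     sc c0 (mon n I) + (\<Sum>i<n. sc (c i) (mon n (insert i I)))"
  proof
    fix x
    have "Lf n c0 c x * mon n I x = c0 * mon n I x + (\<Sum>i<n. c i * ((if x!i then 1 else 0) * mon n I x))"
      unfolding Lf_def distrib_right sum_distrib_right by (simp add: mult.assoc)
    also have "\<dots> = c0 * mon n I x + (\<Sum>i<n. c i * mon n (insert i I) x)"
      using mon_insert[OF fI] by simp
    finally show "Lf n c0 c x * mon n I x = (sc c0 (mon n I) + (\<Sum>i<n. sc (c i) (mon n (insert i I)))) x"
      by (simp add: sum_fun_apply sc_def plus_fun_def)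
  qed
  have m1: "mon n I \<in> Mk n (Suc k)" using assms by (auto simp: Mk_def)
  have m2: "mon n (insert i I) \<in> Mk n (Suc k)" if "i < n" for i
  proof -
    have "card (insert i I) \<le> Suc k" using assms fI by (simp add: card_insert_if)
    then show ?thesis using assms that unfolding Mk_def by blast
  qed
  show ?thesis unfolding eq
    by (intro V.span_add V.span_sum V.span_scale V.span_base m1 m2) auto
qed

lemma Mk_mono: "k \<le> k' \<Longrightarrow> Mk n k \<subseteq> Mk n k'"
  unfolding Mk_def by auto

lemma mult_span:
  assumes "f \<in> V.span (Mk n k)"
  shows "(\<lambda>x. Lf n c0 c x * f x) \<in> V.span (Mk n (Suc k))"
  using assms
proof (induction rule: V.span_induct_alt)
  case base
  then show ?case using V.span_zero by (simp add: zero_fun_def)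
next
  case (step a g h)
  then obtain I where I: "I \<subseteq> {..<n}" "card I \<le> k" "g = mon n I" by (auto simp: Mk_def)
  have "(\<lambda>x. Lf n c0 c x * (sc a g + h) x) = sc a (\<lambda>x. Lf n c0 c x * mon n I x) + (\<lambda>x. Lf n c0 c x * h x)"
    by (auto simp: sc_def plus_fun_def algebra_simps I(3))
  then show ?case using mult_mon[OF I(1,2)] step
    by (simp add: V.span_add V.span_scale)
qed

lemma hamming_sum:
  assumes "length x = n" "length a = n"
  shows "real (hamming x a) = (\<Sum>i<n. if a!i then 1 - (if x!i then 1 else 0) else (if x!i then 1 else 0))"
proof -
  have "{i. i < length x \<and> i < length a \<and> x ! i \<noteq> a ! i} = {i\<in>{..<n}. x!i \<noteq> a!i}"
    using assms by auto
  then have "real (hamming x a) = (\<Sum>i\<in>{i\<in>{..<n}. x!i \<noteq> a!i}. 1)"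
    by (simp add: hamming_def)
  also have "\<dots> = (\<Sum>i<n. if x!i \<noteq> a!i then 1 else 0)"
    using sum.inter_filter[of "{..<n}" "\<lambda>_. (1::real)" "\<lambda>i. x!i \<noteq> a!i"] by simp
  also have "\<dots> = (\<Sum>i<n. if a!i then 1 - (if x!i then 1 else 0) else (if x!i then 1 else 0))"
    by (intro sum.cong) auto
  finally show ?thesis .
qed

definition Fa :: "nat \<Rightarrow> nat set \<Rightarrow> bool list \<Rightarrow> bool list \<Rightarrow> real" where
  "Fa n E a x = (if length x = n then (\<Prod>k\<in>E. real (hamming x a) - real k) else 0)"

lemma Fa_span:
  assumes "finite E" "length a = n"
  shows "Fa n E a \<in> V.span (Mk n (card E))"
  using assms(1)
proof (induction E rule: finite_induct)
  case empty
  have "Fa n {} a = mon n {}" by (auto simp: Fa_def mon_def)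
  moreover have "mon n {} \<in> Mk n 0" by (auto simp: Mk_def)
  ultimately show ?case by (simp add: V.span_base)
next
  case (insert k E)
  define c0 where "c0 = (\<Sum>i<n. if a!i then (1::real) else 0) - real k"
  define c where "c = (\<lambda>i. if a!i then (-1::real) else 1)"
  have "Fa n (insert k E) a = (\<lambda>x. Lf n c0 c x * Fa n E a x)"
  proof
    fix x
    show "Fa n (insert k E) a x = Lf n c0 c x * Fa n E a x"
    proof (cases "length x = n")
      case True
      have "Lf n c0 c x = real (hamming x a) - real k"
        unfolding hamming_sum[OF True assms(2)] Lf_def c0_def c_def
        by (simp add: sum_subtractf[symmetric] sum.distrib[symmetric] algebra_simps)
           (intro sum.cong; auto)
      then show ?thesis using True insert by (simp add: Fa_def)
    next
      case False
      then show ?thesis by (simp add: Fa_def)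
    qed
  qed
  then show ?case using mult_span[OF insert(3)] insert by simp
qed

lemma hamming_le: "hamming x y \<le> length x"
proof -
  have "{i. i < length x \<and> i < length y \<and> x ! i \<noteq> y ! i} \<subseteq> {..<length x}" by auto
  then show ?thesis unfolding hamming_def by (metis card_lessThan card_mono finite_lessThan)
qed

lemma hamming_self: "hamming x x = 0"
  by (simp add: hamming_def)

lemma hamming_zero:
  assumes "length x = length y" "hamming x y = 0"
  shows "x = y"
proof (rule nth_equalityI)
  show "length x = length y" by fact
  fix i assume i: "i < length x"
  define A where "A = {i. i < length x \<and> i < length y \<and> x ! i \<noteq> y ! i}"
  have fA: "finite A" unfolding A_def by (rule finite_subset[of _ "{..<length x}"]) auto
  have "card A = 0" using assms(2) by (simp add: hamming_def A_def)
  then have "A = {}" using fA by simp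
  then show "x ! i = y ! i" using i assms(1) unfolding A_def by auto
qed

lemma card_sets: "card {I. I \<subseteq> {..<n} \<and> card I \<le> k} \<le> (n+1)^k"
proof (induction k)
  case 0
  have "{I. I \<subseteq> {..<n} \<and> card I \<le> 0} = {{}}"
    by (auto dest: finite_subset)
  then show ?case by simp
next
  case (Suc k)
  let ?A = "\<lambda>k. {I. I \<subseteq> {..<n} \<and> card I \<le> k}"
  have fin: "finite (?A k)" by (rule finite_subset[of _ "Pow {..<n}"]) auto
  have sub: "?A (Suc k) \<subseteq> insert {} ((\<lambda>(i,J). insert i J) ` ({..<n} \<times> ?A k))"
  proof
    fix I assume I: "I \<in> ?A (Suc k)"
    show "I \<in> insert {} ((\<lambda>(i,J). insert i J) ` ({..<n} \<times> ?A k))"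
    proof (cases "I = {}")
      case False
      then obtain i where i: "i \<in> I" by blast
      have fI: "finite I" using I finite_subset by auto
      have "card (I - {i}) \<le> k" using I i fI by (auto simp: card_Diff_singleton)
      then have "(i, I - {i}) \<in> {..<n} \<times> ?A k" using I i by auto
      moreover have "I = (\<lambda>(i,J). insert i J) (i, I - {i})" using i by auto
      ultimately show ?thesis by blast
    qed simp
  qed
  have "card (?A (Suc k)) \<le> card (insert {} ((\<lambda>(i,J). insert i J) ` ({..<n} \<times> ?A k)))"
    by (rule card_mono[OF _ sub]) (use fin in auto)
  also have "\<dots> \<le> Suc (card ((\<lambda>(i,J). insert i J) ` ({..<n} \<times> ?A k)))"
    by (rule card_insert_le_m1) simp_all
  also have "\<dots> \<le> Suc (card ({..<n} \<times> ?A k))"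
    using card_image_le[of "{..<n} \<times> ?A k" "\<lambda>(i,J). insert i J"] fin by simp
  also have "\<dots> = Suc (n * card (?A k))" by (simp add: card_cartesian_product)
  also have "\<dots> \<le> Suc (n * (n+1)^k)" using Suc.IH by simp
  also have "\<dots> \<le> (n+1)^(Suc k)" using one_le_power[of "n+1" k] by simp
  finally show ?case .
qed

lemma card_Mk: "card (Mk n k) \<le> (n+1)^k"
proof -
  have fin: "finite {I. I \<subseteq> {..<n} \<and> card I \<le> k}" by (rule finite_subset[of _ "Pow {..<n}"]) auto
  show ?thesis unfolding Mk_def using card_image_le[OF fin, of "mon n"] card_sets[of n k] by linarith
qed

lemma finite_Mk: "finite (Mk n k)"
proof -
  have fin: "finite {I. I \<subseteq> {..<n} \<and> card I \<le> k}" by (rule finite_subset[of _ "Pow {..<n}"]) auto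
  then show ?thesis unfolding Mk_def by simp
qed

lemma main_card:
  assumes S: "S \<subseteq> cube n"
  shows "card S \<le> (n+1)^(card (dist_set S - {0}))"
proof -
  define E where "E = dist_set S - {0}"
  have finD: "finite (dist_set S)"
  proof (rule finite_subset[of _ "{..n}"])
    show "dist_set S \<subseteq> {..n}" using S hamming_le by (fastforce simp: dist_set_def cube_def)
  qed simp
  have finE: "finite E" using finD by (simp add: E_def)
  have finS: "finite S"
    using finite_subset[OF S] finite_lists_length_eq[of "UNIV::bool set" n] by (simp add: cube_def)
  have len: "length a = n" if "a \<in> S" for a using S that by (auto simp: cube_def)
  have diag: "Fa n E a a \<noteq> 0" if "a \<in> S" for a
    using that len finE by (auto simp: Fa_def hamming_self E_def)
  have off: "Fa n E a b = 0" if "a \<in> S" "b \<in> S" "a \<noteq> b" for a b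
  proof -
    have "hamming b a \<in> E"
      using that hamming_zero[of b a] len by (auto simp: E_def dist_set_def)
    then show ?thesis using finE len that by (auto simp: Fa_def intro!: prod_zero)
  qed
  have inj: "inj_on (Fa n E) S"
  proof (rule inj_onI)
    fix a b assume ab: "a \<in> S" "b \<in> S" "Fa n E a = Fa n E b"
    show "a = b"
    proof (rule ccontr)
      assume "a \<noteq> b"
      then have "Fa n E b a = 0" using off ab by auto
      then show False using ab diag by metis
    qed
  qed
  have indep: "V.independent (Fa n E ` S)"
  proof (rule V.independent_if_scalars_zero)
    show "finite (Fa n E ` S)" using finS by simp
    fix u g assume sum0: "(\<Sum>x\<in>Fa n E ` S. sc (u x) x) = 0" and g: "g \<in> Fa n E ` S"
    then obtain a where a: "a \<in> S" "g = Fa n E a" by blast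
    have "0 = (\<Sum>x\<in>Fa n E ` S. sc (u x) x) a" using sum0 by (simp add: zero_fun_def)
    also have "\<dots> = (\<Sum>x\<in>Fa n E ` S. u x * x a)" by (simp add: sum_fun_apply sc_def)
    also have "\<dots> = (\<Sum>b\<in>S. u (Fa n E b) * Fa n E b a)"
      by (rule sum.reindex[OF inj, unfolded comp_def])
    also have "\<dots> = u (Fa n E a) * Fa n E a a"
    proof (rule sum.remove[OF finS a(1), THEN trans])
      have "(\<Sum>b\<in>S - {a}. u (Fa n E b) * Fa n E b a) = 0"
        by (rule sum.neutral) (use off a in auto)
      then show "u (Fa n E a) * Fa n E a a + (\<Sum>b\<in>S - {a}. u (Fa n E b) * Fa n E b a) = u (Fa n E a) * Fa n E a a"
        by simp
    qed
    finally show "u g = 0" using diag[OF a(1)] a(2) by simp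
  qed
  have spn: "Fa n E ` S \<subseteq> V.span (Mk n (card E))"
    using Fa_span[OF finE] len by blast
  have "card (Fa n E ` S) \<le> card (Mk n (card E))"
    using V.independent_span_bound[OF finite_Mk indep spn] by simp
  then have "card S \<le> card (Mk n (card E))" using card_image[OF inj] by simp
  then show ?thesis using card_Mk[of n "card E"] unfolding E_def by linarith
qed

theorem lemma3p1:
  fixes n :: nat and S :: "bool list set" and b :: real
  assumes "n > 2" and "b > 1"
    and "S \<subseteq> cube n" and "S \<noteq> {}"
  shows "real (card (dist_set S)) \<ge> log b (real (card S)) / (2 * log b (real n))"
proof -
  define d where "d = card (dist_set S)"
  have finD: "finite (dist_set S)"
  proof (rule finite_subset[of _ "{..n}"])
    show "dist_set S \<subseteq> {..n}" using assms(3) hamming_le by (fastforce simp: dist_set_def cube_def)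
  qed simp
  obtain x where x: "x \<in> S" using assms(4) by blast
  have "0 \<in> dist_set S" using x hamming_self unfolding dist_set_def by (metis (mono_tags, lifting) mem_Collect_eq)
  then have cD: "card (dist_set S - {0}) = d - 1" and d1: "d \<ge> 1"
    using finD by (auto simp: d_def card_Diff_singleton Suc_leI card_gt_0_iff)
      (metis Suc_leI card_gt_0_iff empty_iff)
  have finS: "finite S"
    using finite_subset[OF assms(3)] finite_lists_length_eq[of "UNIV::bool set" n] by (simp add: cube_def)
  have cS: "card S \<ge> 1" using finS assms(4) by (simp add: Suc_leI card_gt_0_iff)
  have nn: "n + 1 \<le> n * n"
  proof -
    have "2 * n \<le> n * n" using assms(1) by (intro mult_le_mono1) simp
    then show ?thesis using assms(1) by linarith
  qed
  have "card S \<le> (n+1)^(d-1)" using main_card[OF assms(3)] cD by simp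
  also have "\<dots> \<le> (n^2)^(d-1)"
    by (rule power_mono) (use nn in \<open>auto simp: power2_eq_square\<close>)
  also have "\<dots> \<le> (n^2)^d"
    by (rule power_increasing) (use assms(1) in auto)
  also have "\<dots> = n^(2*d)" by (simp add: power_mult)
  finally have le: "real (card S) \<le> real n ^ (2*d)" by (metis of_nat_le_iff of_nat_power)
  have "log b (real (card S)) \<le> log b (real n ^ (2*d))"
    using le cS assms(1,2) by (subst log_le_cancel_iff) auto
  also have "\<dots> = real (2*d) * log b (real n)"
    using assms(1) by (simp add: log_nat_power)
  finally have L: "log b (real (card S)) \<le> 2 * real d * log b (real n)" by simp
  have pos: "log b (real n) > 0" using assms(1,2) by simp
  show ?thesis unfolding d_def[symmetric]
    using L pos by (simp add: pos_divide_le_eq mult_ac)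
qed

end
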